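(* Let $\Gamma\in\mathcal S$ have vertices $v_1,\dots,v_n$ and let $\varphi$ be an embedding into $\mathbb Z^n$ with no index of type (10). Then $\varphi$ has no index of type (4) if and only if $\sum_{i=1}^n d(v_i)=-3n-1$.
   Context: A plumbing tree is a finite tree $\Gamma$ each of whose vertices $v$ carries an integer decoration $d(v)$. $\Gamma$ is minimal if no vertex has decoration $-1$. For $n\ge 1$ let $(\mathbb Z^n,Q_n)$ be the lattice with basis $E_1,\dots,E_n$ and $Q_n(E_i,E_j)=-\delta_{ij}$, and let $K=\sum_{i=1}^n E_i$. A plumbing tree $\Gamma$ on $n$ vertices is a symplectic plumbing tree if there is a map $\varphi$ (an embedding) from its vertex set to $\mathbb Z^n$ such that: for distinct vertices $v_1,v_2$, $Q_n(\varphi(v_1),\varphi(v_2))$ is $1$ if they are adjacent and $0$ otherwise; $Q_n(\varphi(v),\varphi(v))=d(v)$ for every $v$; and $Q_n(\varphi(v),K)+Q_n(\varphi(v),\varphi(v))=-2$ for every $v$. $\mathcal S$ is the set of minimal, connected symplectic plumbing trees. Index types: write $\varphi(v)=\sum_i a_{v,i}E_i$; for an index $i$ consider the multiset of nonzero coefficients $a_{v,i}$ as $v$ ranges over all vertices. Index $i$ is of type (1) if this multiset is $\{1\}$, (2) if $\{-1\}$, (3) if $\{-2\}$, (4) if $\{1,-1\}$, (5) if $\{1,-2\}$, (6) if $\{-1,-1\}$, (7) if $\{1,-1,-1\}$, (9) if $\{1,-1,-1,-1\}$, and (10) if it is empty. *)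

theory Defs
  imports Main "HOL-Library.Multiset"
begin

text \<open>A plumbing graph on n vertices: vertices are 0..<n, adjacency adj, decoration d.
  Lattice vectors of Z^n are functions nat => int supported on {0..<n}.\<close>

definition Qn :: "nat \<Rightarrow> (nat \<Rightarrow> int) \<Rightarrow> (nat \<Rightarrow> int) \<Rightarrow> int" where
  "Qn n x y = - (\<Sum>i<n. x i * y i)"

definition Kvec :: "nat \<Rightarrow> int" where
  "Kvec = (\<lambda>_. 1)"

definition graph_connected :: "nat \<Rightarrow> (nat \<Rightarrow> nat \<Rightarrow> bool) \<Rightarrow> bool" where
  "graph_connected n adj \<longleftrightarrow>
     (\<forall>u<n. \<forall>v<n. (u, v) \<in> {(x, y). adj x y}\<^sup>*)"

definition graph_acyclic :: "(nat \<Rightarrow> nat \<Rightarrow> bool) \<Rightarrow> bool" where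
  "graph_acyclic adj \<longleftrightarrow>
     \<not> (\<exists>vs. length vs \<ge> 3 \<and> distinct vs
          \<and> (\<forall>j. j + 1 < length vs \<longrightarrow> adj (vs ! j) (vs ! (j + 1)))
          \<and> adj (last vs) (hd vs))"

definition plumbing_tree :: "nat \<Rightarrow> (nat \<Rightarrow> nat \<Rightarrow> bool) \<Rightarrow> bool" where
  "plumbing_tree n adj \<longleftrightarrow>
     n \<ge> 1
     \<and> (\<forall>u v. adj u v \<longrightarrow> u < n \<and> v < n)
     \<and> (\<forall>u v. adj u v \<longrightarrow> adj v u)
     \<and> (\<forall>u. \<not> adj u u)
     \<and> graph_connected n adj
     \<and> graph_acyclic adj"

definition is_embedding ::
  "nat \<Rightarrow> (nat \<Rightarrow> nat \<Rightarrow> bool) \<Rightarrow> (nat \<Rightarrow> int) \<Rightarrow> (nat \<Rightarrow> nat \<Rightarrow> int) \<Rightarrow> bool" where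
  "is_embedding n adj d \<phi> \<longleftrightarrow>
     (\<forall>v<n. \<forall>i. n \<le> i \<longrightarrow> \<phi> v i = 0)
     \<and> (\<forall>u<n. \<forall>v<n. u \<noteq> v \<longrightarrow> Qn n (\<phi> u) (\<phi> v) = (if adj u v then 1 else 0))
     \<and> (\<forall>v<n. Qn n (\<phi> v) (\<phi> v) = d v)
     \<and> (\<forall>v<n. Qn n (\<phi> v) Kvec + Qn n (\<phi> v) (\<phi> v) = -2)"

definition symplectic_plumbing_tree :: "nat \<Rightarrow> (nat \<Rightarrow> nat \<Rightarrow> bool) \<Rightarrow> (nat \<Rightarrow> int) \<Rightarrow> bool" where
  "symplectic_plumbing_tree n adj d \<longleftrightarrow>
     plumbing_tree n adj \<and> (\<exists>\<phi>. is_embedding n adj d \<phi>)"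

definition in_S :: "nat \<Rightarrow> (nat \<Rightarrow> nat \<Rightarrow> bool) \<Rightarrow> (nat \<Rightarrow> int) \<Rightarrow> bool" where
  "in_S n adj d \<longleftrightarrow>
     symplectic_plumbing_tree n adj d \<and> graph_connected n adj \<and> (\<forall>v<n. d v \<noteq> -1)"

definition index_mset :: "nat \<Rightarrow> (nat \<Rightarrow> nat \<Rightarrow> int) \<Rightarrow> nat \<Rightarrow> int multiset" where
  "index_mset n \<phi> i = image_mset (\<lambda>v. \<phi> v i) (mset_set {v. v < n \<and> \<phi> v i \<noteq> 0})"

definition index_type4 :: "nat \<Rightarrow> (nat \<Rightarrow> nat \<Rightarrow> int) \<Rightarrow> nat \<Rightarrow> bool" where
  "index_type4 n \<phi> i \<longleftrightarrow> index_mset n \<phi> i = {#1, -1#}"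

definition index_type10 :: "nat \<Rightarrow> (nat \<Rightarrow> nat \<Rightarrow> int) \<Rightarrow> nat \<Rightarrow> bool" where
  "index_type10 n \<phi> i \<longleftrightarrow> index_mset n \<phi> i = {#}"

end

theory Submission
  imports Defs
begin


definition RR :: "nat set \<Rightarrow> (nat \<Rightarrow> nat \<Rightarrow> bool) \<Rightarrow> (nat \<times> nat) set" where
  "RR V adj = {(x,y). adj x y \<and> x \<in> V \<and> y \<in> V}"

definition pathset :: "nat set \<Rightarrow> (nat \<Rightarrow> nat \<Rightarrow> bool) \<Rightarrow> nat list set" where
  "pathset V adj = {vs. distinct vs \<and> set vs \<subseteq> V \<and> (\<forall>j. j + 1 < length vs \<longrightarrow> adj (vs ! j) (vs ! (j + 1)))}"

lemma leaf_exists: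
  assumes fin: "finite V" and sym: "\<forall>u v. adj u v \<longrightarrow> adj v u" and irr: "\<forall>u. \<not> adj u u"
    and acyc: "graph_acyclic adj" and e: "adj a b" "a \<in> V" "b \<in> V"
  shows "\<exists>l\<in>V. \<exists>p\<in>V. l \<noteq> p \<and> adj l p \<and> (\<forall>y\<in>V. adj l y \<longrightarrow> y = p)"
proof -
  let ?P = "pathset V adj"
  have finP: "finite ?P"
  proof (rule finite_subset[OF _ finite_lists_length_le[OF fin, of "card V"]])
    show "?P \<subseteq> {xs. set xs \<subseteq> V \<and> length xs \<le> card V}"
    proof
      fix xs assume "xs \<in> ?P"
      then have "distinct xs" "set xs \<subseteq> V" unfolding pathset_def by auto
      then show "xs \<in> {xs. set xs \<subseteq> V \<and> length xs \<le> card V}"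
      proof -
        have "length xs = card (set xs)" using \<open>distinct xs\<close> by (simp add: distinct_card)
        also have "\<dots> \<le> card V" using card_mono[OF fin \<open>set xs \<subseteq> V\<close>] .
        finally show ?thesis using \<open>set xs \<subseteq> V\<close> by simp
      qed
    qed
  qed
  have ab: "[a,b] \<in> ?P" using e irr unfolding pathset_def
    by (auto simp: less_Suc_eq nth_Cons split: nat.splits)
  have "Max (length ` ?P) \<in> length ` ?P" using finP ab by (intro Max_in) auto
  then obtain vs where vsP: "vs \<in> ?P" and vl: "length vs = Max (length ` ?P)" by auto
  have vsmax: "\<forall>ws\<in>?P. length ws \<le> length vs" using finP vl by auto
  have len: "length vs \<ge> 2" using vsmax ab by fastforce
  define k where "k = length vs"
  define x where "x = vs ! (k - 1)"
  define pr where "pr = vs ! (k - 2)"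
  have dist: "distinct vs" and sv: "set vs \<subseteq> V"
    and ad: "\<And>j. j + 1 < k \<Longrightarrow> adj (vs ! j) (vs ! (j + 1))"
    using vsP unfolding pathset_def k_def by auto
  have xV: "x \<in> V" using sv len unfolding x_def k_def by auto
  have prV: "pr \<in> V" using sv len unfolding pr_def k_def by auto
  have kk: "k - 2 + 1 = k - 1" "k - 2 + 1 < k" using len unfolding k_def by auto
  have adjpx: "adj pr x" using ad[OF kk(2)] unfolding pr_def x_def kk(1) .
  have xpr: "x \<noteq> pr" using irr adjpx by auto
  have "\<forall>y\<in>V. adj x y \<longrightarrow> y = pr"
  proof (intro ballI impI, rule ccontr)
    fix y assume yV: "y \<in> V" and axy: "adj x y" and ypr: "y \<noteq> pr"
    show False
    proof (cases "y \<in> set vs")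
      case False
      have "vs @ [y] \<in> ?P"
        unfolding pathset_def
      proof (intro CollectI conjI allI impI)
        show "distinct (vs @ [y])" using dist False by simp
        show "set (vs @ [y]) \<subseteq> V" using sv yV by simp
        fix j assume j: "j + 1 < length (vs @ [y])"
        show "adj ((vs @ [y]) ! j) ((vs @ [y]) ! (j + 1))"
        proof (cases "j + 1 < k")
          case True then show ?thesis using ad[OF True] unfolding k_def by (simp add: nth_append)
        next
          case False
          then have "j = k - 1" using j unfolding k_def by simp
          moreover have "(vs @ [y]) ! (k - 1) = x"
          proof -
            have "k - 1 < length vs" using len unfolding k_def by simp
            then show ?thesis unfolding x_def by (simp add: nth_append)
          qed
          moreover have "(vs @ [y]) ! (k - 1 + 1) = y"
          proof -
            have "k - 1 + 1 = length vs" using len unfolding k_def by simp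
            then show ?thesis by simp
          qed
          ultimately show ?thesis using axy by simp
        qed
      qed
      then show False using vsmax by fastforce
    next
      case True
      then obtain j where j: "j < k" "vs ! j = y" unfolding k_def by (metis in_set_conv_nth)
      have "j \<noteq> k - 1" using j irr axy unfolding x_def by auto
      moreover have "j \<noteq> k - 2" using j ypr unfolding pr_def by auto
      ultimately have jk: "j + 3 \<le> k" using j by linarith
      define cyc where "cyc = drop j vs"
      have "length cyc \<ge> 3" using jk unfolding cyc_def k_def by simp
      moreover have "distinct cyc" using dist unfolding cyc_def by simp
      moreover have "\<forall>t. t + 1 < length cyc \<longrightarrow> adj (cyc ! t) (cyc ! (t + 1))"
        using ad unfolding cyc_def k_def by (simp add: add.assoc)
      moreover have "last cyc = x" unfolding cyc_def x_def k_def using jk k_def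
        by (simp add: last_conv_nth)
      moreover have "hd cyc = y" unfolding cyc_def using j k_def by (simp add: hd_drop_conv_nth)
      ultimately show False using acyc axy unfolding graph_acyclic_def by blast
    qed
  qed
  then show ?thesis using xV prV xpr adjpx sym by blast
qed

lemma tree_edges:
  assumes sym: "\<forall>u v. adj u v \<longrightarrow> adj v u" and irr: "\<forall>u. \<not> adj u u"
    and acyc: "graph_acyclic adj"
  shows "finite V \<Longrightarrow> card V = k \<Longrightarrow> V \<noteq> {} \<Longrightarrow> (\<forall>u\<in>V. \<forall>v\<in>V. (u,v) \<in> (RR V adj)\<^sup>*)
     \<Longrightarrow> card (RR V adj) = 2 * (card V - 1)"
proof (induction k arbitrary: V)
  case 0 then show ?case by simp
next
  case (Suc k)
  have finR: "finite (RR V adj)"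
    by (rule finite_subset[of _ "V \<times> V"]) (auto simp: RR_def Suc.prems(1))
  show ?case
  proof (cases "k = 0")
    case True
    then obtain x where "V = {x}" using Suc.prems(2) card_1_singletonE by (metis One_nat_def)
    then have "RR V adj = {}" using irr unfolding RR_def by auto
    then show ?thesis using \<open>V = {x}\<close> by simp
  next
    case False
    then have "card V \<ge> 2" using Suc.prems by simp
    then obtain a b where ab: "a \<in> V" "b \<in> V" "a \<noteq> b"
      by (metis One_nat_def Suc_1 card_le_Suc0_iff_eq not_less_eq_eq Suc.prems(1))
    have "(a, b) \<in> (RR V adj)\<^sup>*" using Suc.prems(4) ab by blast
    then obtain z where "(a, z) \<in> RR V adj" using ab(3) by (metis converse_rtranclE)
    then have e: "adj a z" "a \<in> V" "z \<in> V" unfolding RR_def by auto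
    obtain l p where lV: "l \<in> V" and pV: "p \<in> V" and lp: "l \<noteq> p" "adj l p"
      and leaf: "\<forall>y\<in>V. adj l y \<longrightarrow> y = p"
      using leaf_exists[OF Suc.prems(1) sym irr acyc e] by blast
    define W where "W = V - {l}"
    have finW: "finite W" using Suc.prems(1) unfolding W_def by simp
    have cW: "card W = k" using Suc.prems lV unfolding W_def by simp
    have pW: "p \<in> W" using pV lp unfolding W_def by simp
    have reach: "(p, x) \<in> (RR V adj)\<^sup>* \<Longrightarrow> x = l \<or> (p, x) \<in> (RR W adj)\<^sup>*" for x
    proof (induction rule: rtrancl_induct)
      case base then show ?case by simp
    next
      case (step y z)
      then have yz: "adj y z" "y \<in> V" "z \<in> V" unfolding RR_def by auto
      show ?case
      proof (cases "z = l")
        case True then show ?thesis by simp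
      next
        case zl: False
        show ?thesis
        proof (cases "y = l")
          case True
          then have "z = p" using leaf yz by auto
          then show ?thesis by simp
        next
          case False
          then have "(p, y) \<in> (RR W adj)\<^sup>*" using step.IH by simp
          moreover have "(y, z) \<in> RR W adj" using yz False zl unfolding RR_def W_def by auto
          ultimately show ?thesis by (simp add: rtrancl.rtrancl_into_rtrancl)
        qed
      qed
    qed
    have symW: "(RR W adj)\<inverse> = RR W adj" using sym unfolding RR_def by auto
    have connW: "\<forall>u\<in>W. \<forall>v\<in>W. (u, v) \<in> (RR W adj)\<^sup>*"
    proof (intro ballI)
      fix u v assume u: "u \<in> W" and v: "v \<in> W"
      have "(p, u) \<in> (RR W adj)\<^sup>*" using reach[of u] Suc.prems(4) pV u unfolding W_def by auto
      then have "(u, p) \<in> ((RR W adj)\<inverse>)\<^sup>*" by (simp add: rtrancl_converse)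
      then have up: "(u, p) \<in> (RR W adj)\<^sup>*" using symW by simp
      have "(p, v) \<in> (RR W adj)\<^sup>*" using reach[of v] Suc.prems(4) pV v unfolding W_def by auto
      then show "(u, v) \<in> (RR W adj)\<^sup>*" using up by simp
    qed
    have IHW: "card (RR W adj) = 2 * (card W - 1)"
      using Suc.IH[OF finW cW _ connW] pW by auto
    have RV: "RR V adj = insert (l, p) (insert (p, l) (RR W adj))"
    proof
      show "RR V adj \<subseteq> insert (l, p) (insert (p, l) (RR W adj))"
      proof
        fix e assume "e \<in> RR V adj"
        then obtain x y where e: "e = (x, y)" "adj x y" "x \<in> V" "y \<in> V" unfolding RR_def by auto
        show "e \<in> insert (l, p) (insert (p, l) (RR W adj))"
        proof (cases "x = l")
          case True then show ?thesis using leaf e by auto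
        next
          case False
          show ?thesis
          proof (cases "y = l")
            case True then have "x = p" using leaf e sym by auto
            then show ?thesis using e True by auto
          next
            case yl: False
            then show ?thesis using e False unfolding RR_def W_def by auto
          qed
        qed
      qed
      show "insert (l, p) (insert (p, l) (RR W adj)) \<subseteq> RR V adj"
        using lV pV lp sym unfolding RR_def W_def by auto
    qed
    have n1: "(l, p) \<notin> insert (p, l) (RR W adj)" using lp unfolding RR_def W_def by auto
    have n2: "(p, l) \<notin> RR W adj" unfolding RR_def W_def by auto
    have finRW: "finite (RR W adj)" by (rule finite_subset[of _ "W \<times> W"]) (auto simp: RR_def finW)
    have "card (RR V adj) = card (RR W adj) + 2" unfolding RV using n1 n2 finRW by simp
    then show ?thesis using IHW cW Suc.prems(2) pW False by simp
  qed
qed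



lemma edge_sum:
  "(\<Sum>u<n. \<Sum>v<n. of_bool (adj u v) :: int) = int (card (RR {..<n} adj))"
proof -
  have "(\<Sum>u<n. \<Sum>v<n. of_bool (adj u v) :: int) = (\<Sum>x\<in>{..<n} \<times> {..<n}. of_bool (adj (fst x) (snd x)))"
    unfolding sum.cartesian_product by (rule sum.cong) auto
  also have "\<dots> = int (card (({..<n} \<times> {..<n}) \<inter> {x. adj (fst x) (snd x)}))"
    by simp
  also have "({..<n} \<times> {..<n}) \<inter> {x. adj (fst x) (snd x)} = RR {..<n} adj"
    unfolding RR_def by auto
  finally show ?thesis .
qed

lemma sq_sum:
  fixes f :: "nat \<Rightarrow> nat \<Rightarrow> int"
  shows "(\<Sum>i<n. (\<Sum>u<m. f u i) * (\<Sum>v<m. f v i)) = (\<Sum>u<m. \<Sum>v<m. \<Sum>i<n. f u i * f v i)"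
proof -
  have "(\<Sum>i<n. (\<Sum>u<m. f u i) * (\<Sum>v<m. f v i)) = (\<Sum>i<n. \<Sum>u<m. \<Sum>v<m. f u i * f v i)"
    by (simp add: sum_product)
  also have "\<dots> = (\<Sum>u<m. \<Sum>i<n. \<Sum>v<m. f u i * f v i)" by (rule sum.swap)
  also have "\<dots> = (\<Sum>u<m. \<Sum>v<m. \<Sum>i<n. f u i * f v i)" by (simp add: sum.swap[of _ "{..<n}"])
  finally show ?thesis .
qed

lemma lin_sum:
  fixes f :: "nat \<Rightarrow> nat \<Rightarrow> int"
  shows "(\<Sum>i<n. g i * (\<Sum>v<m. f v i)) = (\<Sum>v<m. \<Sum>i<n. g i * f v i)"
  by (simp add: sum_distrib_left sum.swap[of _ "{..<n}"])

lemma int_facts: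
  fixes s :: int
  shows "s * (s + 1) \<ge> 0" "(s + 1) * (s + 2) \<ge> 0"
    "s * (s + 1) \<le> 2 \<Longrightarrow> s \<in> {-2, -1, 0, 1}"
    "s * (s + 1) = 0 \<Longrightarrow> s \<in> {-1, 0}"
proof -
  show "s * (s + 1) \<ge> 0" by (cases "s \<ge> 0") (auto simp: zero_le_mult_iff)
  show "(s + 1) * (s + 2) \<ge> 0" by (cases "s \<ge> -1") (auto simp: zero_le_mult_iff)
  show "s * (s + 1) \<le> 2 \<Longrightarrow> s \<in> {-2, -1, 0, 1}"
  proof -
    assume a: "s * (s + 1) \<le> 2"
    have "s \<le> 1"
    proof (rule ccontr)
      assume "\<not> s \<le> 1" then have "s \<ge> 2" by simp
      then have "s * (s + 1) \<ge> 2 * 3" by (intro mult_mono) auto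
      then show False using a by simp
    qed
    moreover have "s \<ge> -2"
    proof (rule ccontr)
      assume "\<not> s \<ge> -2" then have "-s \<ge> 3" by simp
      then have "(-s) * (-s - 1) \<ge> 3 * 2" by (intro mult_mono) auto
      then show False using a by (simp add: algebra_simps)
    qed
    ultimately show ?thesis by auto
  qed
  show "s * (s + 1) = 0 \<Longrightarrow> s \<in> {-1, 0}"
  proof -
    assume "s * (s + 1) = 0"
    then have "s = 0 \<or> s + 1 = 0" by (simp only: mult_eq_0_iff)
    then show ?thesis by auto
  qed
qed



theorem mainTheorem13:
  fixes n :: nat and adj :: "nat \<Rightarrow> nat \<Rightarrow> bool" and d :: "nat \<Rightarrow> int"
    and \<phi> :: "nat \<Rightarrow> nat \<Rightarrow> int"
  assumes "in_S n adj d"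
    and "is_embedding n adj d \<phi>"
    and "\<forall>i<n. \<not> index_type10 n \<phi> i"
  shows "(\<forall>i<n. \<not> index_type4 n \<phi> i) \<longleftrightarrow> (\<Sum>v<n. d v) = - 3 * int n - 1"
proof -
  have pt: "plumbing_tree n adj" and mini: "\<forall>v<n. d v \<noteq> -1"
    using assms(1) unfolding in_S_def symplectic_plumbing_tree_def by auto
  have n1: "n \<ge> 1" and inr: "\<forall>u v. adj u v \<longrightarrow> u < n \<and> v < n"
    and sym: "\<forall>u v. adj u v \<longrightarrow> adj v u"
    and irr: "\<forall>u. \<not> adj u u" and conn: "graph_connected n adj" and acyc: "graph_acyclic adj"
    using pt unfolding plumbing_tree_def by auto
  have E0: "\<forall>v<n. \<forall>i. n \<le> i \<longrightarrow> \<phi> v i = 0" using assms(2) unfolding is_embedding_def by auto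
  have E1: "(\<Sum>i<n. \<phi> u i * \<phi> v i) = - of_bool (adj u v)" if "u<n" "v<n" "u\<noteq>v" for u v
  proof -
    have "Qn n (\<phi> u) (\<phi> v) = (if adj u v then 1 else 0)"
      using assms(2) that unfolding is_embedding_def by auto
    then have "- (\<Sum>i<n. \<phi> u i * \<phi> v i) = of_bool (adj u v)" unfolding Qn_def by simp
    then show ?thesis by linarith
  qed
  have E2: "(\<Sum>i<n. \<phi> v i * \<phi> v i) = - d v" if "v<n" for v
  proof -
    have "Qn n (\<phi> v) (\<phi> v) = d v" using assms(2) that unfolding is_embedding_def by auto
    then show ?thesis unfolding Qn_def by simp
  qed
  have E3: "(\<Sum>i<n. \<phi> v i) = d v + 2" if "v<n" for v
  proof -
    have "Qn n (\<phi> v) Kvec + Qn n (\<phi> v) (\<phi> v) = -2"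
      using assms(2) that unfolding is_embedding_def by auto
    then show ?thesis using E2[OF that] unfolding Qn_def Kvec_def by simp
  qed
  have dotall: "(\<Sum>i<n. \<phi> u i * \<phi> v i) = - of_bool (adj u v) - (if u = v then d v else 0)"
    if "u<n" "v<n" for u v
    using E1 E2 irr that by (cases "u = v") auto
  have row: "(\<Sum>i<n. \<phi> v i * (\<phi> v i + 1)) = 2" if "v<n" for v
  proof -
    have "(\<Sum>i<n. \<phi> v i * (\<phi> v i + 1)) = (\<Sum>i<n. \<phi> v i * \<phi> v i) + (\<Sum>i<n. \<phi> v i)"
      by (simp add: algebra_simps sum.distrib)
    then show ?thesis using E2[OF that] E3[OF that] by simp
  qed
  have entry: "\<phi> v i \<in> {-2,-1,0,1}" if "v<n" for v i
  proof (cases "i < n")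
    case True
    have "\<phi> v i * (\<phi> v i + 1) \<le> (\<Sum>i<n. \<phi> v i * (\<phi> v i + 1))"
      by (rule member_le_sum) (auto simp: int_facts True)
    then show ?thesis using row[OF that] int_facts(3) by auto
  next
    case False then show ?thesis using E0 that by auto
  qed
  have only: "\<phi> v k \<in> {-1, 0}" if "v<n" "i<n" "k<n" "k \<noteq> i" "\<phi> v i = 1" for v i k
  proof -
    have "(\<Sum>x\<in>{i,k}. \<phi> v x * (\<phi> v x + 1)) \<le> (\<Sum>x<n. \<phi> v x * (\<phi> v x + 1))"
      by (rule sum_mono2) (auto simp: that int_facts)
    then have "\<phi> v k * (\<phi> v k + 1) \<le> 0" using row[OF that(1)] that by simp
    then have "\<phi> v k * (\<phi> v k + 1) = 0" using int_facts(1)[of "\<phi> v k"] by linarith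
    then show ?thesis using int_facts(4) by blast
  qed
  have one_unique: "u = w" if "u<n" "w<n" "i<n" "\<phi> u i = 1" "\<phi> w i = 1" for u w i
  proof (rule ccontr)
    assume uw: "u \<noteq> w"
    have "(\<Sum>k<n. \<phi> u k * \<phi> w k) = - of_bool (adj u w)" using E1 that uw by auto
    then have le: "(\<Sum>k<n. \<phi> u k * \<phi> w k) \<le> 0" by simp
    have "(\<Sum>k<n. \<phi> u k * \<phi> w k) = \<phi> u i * \<phi> w i + (\<Sum>k\<in>{..<n}-{i}. \<phi> u k * \<phi> w k)"
      using that(3) by (simp add: sum.remove)
    moreover have "(\<Sum>k\<in>{..<n}-{i}. \<phi> u k * \<phi> w k) \<ge> 0"
    proof (rule sum_nonneg)
      fix k assume "k \<in> {..<n}-{i}"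
      then have "\<phi> u k \<in> {-1,0}" "\<phi> w k \<in> {-1,0}" using only that by auto
      then show "0 \<le> \<phi> u k * \<phi> w k" by auto
    qed
    ultimately show False using le that by simp
  qed
  define s where "s i = (\<Sum>v<n. \<phi> v i)" for i
  define deg where "deg u = (\<Sum>v<n. of_bool (adj u v) :: int)" for u
  have Edges: "(\<Sum>u<n. deg u) = 2 * (int n - 1)"
  proof -
    have R: "RR {..<n} adj = {(x,y). adj x y}" using inr unfolding RR_def by auto
    have "card (RR {..<n} adj) = 2 * (card {..<n::nat} - 1)"
    proof (rule tree_edges[OF sym irr acyc])
      show "{..<n} \<noteq> {}" using n1 lessThan_empty_iff by (metis not_one_le_zero)
      show "\<forall>u\<in>{..<n}. \<forall>v\<in>{..<n}. (u, v) \<in> (RR {..<n} adj)\<^sup>*"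
        using conn R unfolding graph_connected_def by auto
    qed auto
    then show ?thesis unfolding deg_def edge_sum using n1 by simp
  qed
  have inner: "(\<Sum>v<n. \<Sum>i<n. \<phi> u i * \<phi> v i) = - deg u - d u" if "u<n" for u
  proof -
    have "(\<Sum>v<n. \<Sum>i<n. \<phi> u i * \<phi> v i) = (\<Sum>v<n. - of_bool (adj u v) - (if u = v then d v else 0))"
      using dotall that by (intro sum.cong) auto
    also have "\<dots> = - deg u - d u" using that unfolding deg_def by (simp add: sum.distrib sum_negf sum_subtractf)
    finally show ?thesis .
  qed
  have pervertex: "(\<Sum>i<n. \<phi> u i * s i) = - d u - deg u" if "u<n" for u
    unfolding s_def lin_sum using inner[OF that] by simp
  have S2: "(\<Sum>i<n. s i * s i) = - (\<Sum>v<n. d v) - 2 * (int n - 1)"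
  proof -
    have "(\<Sum>i<n. s i * s i) = (\<Sum>u<n. \<Sum>v<n. \<Sum>i<n. \<phi> u i * \<phi> v i)"
      unfolding s_def by (rule sq_sum)
    also have "\<dots> = (\<Sum>u<n. - deg u - d u)" using inner by (intro sum.cong) auto
    also have "\<dots> = - (\<Sum>v<n. d v) - 2 * (int n - 1)" using Edges by (simp add: sum_subtractf sum_negf)
    finally show ?thesis .
  qed
  have S1: "(\<Sum>i<n. s i) = (\<Sum>v<n. d v) + 2 * int n"
  proof -
    have "(\<Sum>i<n. s i) = (\<Sum>v<n. \<Sum>i<n. \<phi> v i)" unfolding s_def by (rule sum.swap)
    also have "\<dots> = (\<Sum>v<n. d v + 2)" using E3 by (intro sum.cong) auto
    finally show ?thesis by (simp add: sum.distrib)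
  qed
  have Key: "(\<Sum>i<n. s i * (s i + 1)) = 2"
  proof -
    have "(\<Sum>i<n. s i * (s i + 1)) = (\<Sum>i<n. s i * s i) + (\<Sum>i<n. s i)"
      by (simp add: algebra_simps sum.distrib)
    then show ?thesis using S1 S2 n1 by simp
  qed
  have Q: "(\<Sum>i<n. (s i + 1) * (s i + 2)) = 2 + 2 * (\<Sum>v<n. d v) + 6 * int n"
  proof -
    have "(\<Sum>i<n. (s i + 1) * (s i + 2)) = (\<Sum>i<n. s i * (s i + 1) + 2 * s i + 2)"
      by (intro sum.cong) (auto simp: algebra_simps)
    also have "\<dots> = (\<Sum>i<n. s i * (s i + 1)) + 2 * (\<Sum>i<n. s i) + 2 * int n"
      by (simp add: sum.distrib sum_distrib_left)
    finally have "(\<Sum>i<n. (s i + 1) * (s i + 2)) = (\<Sum>i<n. s i * (s i + 1)) + 2 * (\<Sum>i<n. s i) + 2 * int n" .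
    then show ?thesis using S1 Key by simp
  qed
  define A where "A i = {v. v < n \<and> \<phi> v i \<noteq> 0}" for i
  have finA: "finite (A i)" for i unfolding A_def by simp
  have sA: "s i = (\<Sum>v\<in>A i. \<phi> v i)" for i
    unfolding s_def A_def by (rule sum.mono_neutral_right) auto
  have im: "index_mset n \<phi> i = image_mset (\<lambda>v. \<phi> v i) (mset_set (A i))" for i
    unfolding index_mset_def A_def ..
  have t10: "index_type10 n \<phi> i \<longleftrightarrow> A i = {}" for i
    unfolding index_type10_def im using finA mset_set_empty_iff by auto
  have t4s: "s i = 0" if "index_type4 n \<phi> i" for i
  proof -
    have "s i = sum_mset (image_mset (\<lambda>v. \<phi> v i) (mset_set (A i)))"
      unfolding sA by (rule sum_unfold_sum_mset)
    also have "\<dots> = sum_mset {#1, -1#}" using that unfolding index_type4_def im by simp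
    finally show ?thesis by simp
  qed
  have s0t4: "index_type4 n \<phi> i" if "i < n" "s i = 0" "A i \<noteq> {}" for i
  proof -
    have neg: "\<phi> v i \<le> -1" if "v \<in> A i" "\<phi> v i \<noteq> 1" for v
      using entry[of v i] that unfolding A_def by auto
    obtain u where u: "u \<in> A i" "\<phi> u i = 1"
    proof (rule ccontr)
      assume "\<not> thesis"
      then have "\<forall>v\<in>A i. \<phi> v i \<le> -1" using neg that by blast
      then have "(\<Sum>v\<in>A i. \<phi> v i) \<le> (\<Sum>v\<in>A i. -1)" by (intro sum_mono) auto
      also have "\<dots> < 0" using finA \<open>A i \<noteq> {}\<close> by (simp add: card_gt_0_iff)
      finally show False using sA \<open>s i = 0\<close> by simp
    qed
    define B where "B = A i - {u}"
    have finB: "finite B" unfolding B_def using finA by simp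
    have sB: "(\<Sum>v\<in>B. \<phi> v i) = -1" using sA[of i] \<open>s i = 0\<close> u finA unfolding B_def
      by (simp add: sum.remove)
    have negB: "\<phi> v i \<le> -1" if "v \<in> B" for v
    proof -
      have "\<phi> v i \<noteq> 1" using one_unique[of v u i] that u \<open>i < n\<close> unfolding B_def A_def by auto
      then show ?thesis using neg that unfolding B_def by auto
    qed
    have "(\<Sum>v\<in>B. \<phi> v i) \<le> (\<Sum>v\<in>B. -1)" using negB by (intro sum_mono) auto
    then have cB: "card B \<le> 1" using sB by simp
    have "B \<noteq> {}" using sB by auto
    then obtain w where Bw: "B = {w}" using cB finB
      by (metis card_0_eq card_1_singletonE le_neq_implies_less less_one)
    have w: "\<phi> w i = -1" using sB Bw by simp
    have Ai: "A i = {u, w}" using Bw u unfolding B_def by auto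
    have "u \<noteq> w" using Bw unfolding B_def by auto
    then show ?thesis unfolding index_type4_def im Ai using u w by simp
  qed
  show ?thesis
  proof
    assume no4: "\<forall>i<n. \<not> index_type4 n \<phi> i"
    have nz: "s i \<noteq> 0" if "i < n" for i
      using s0t4[OF that] no4 assms(3) t10 that by blast
    have bnd: "s i \<in> {-2,-1,0,1}" if "i < n" for i
    proof -
      have "s i * (s i + 1) \<le> (\<Sum>i<n. s i * (s i + 1))"
        by (rule member_le_sum) (auto simp: int_facts that)
      then show ?thesis using Key int_facts(3) by auto
    qed
    have no1: "s j \<noteq> 1" if "j < n" for j
    proof
      assume sj: "s j = 1"
      have others: "s i = -1" if "i < n" "i \<noteq> j" for i
      proof -
        have "(\<Sum>x\<in>{j,i}. s x * (s x + 1)) \<le> (\<Sum>x<n. s x * (s x + 1))"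
          by (rule sum_mono2) (auto simp: that \<open>j < n\<close> int_facts)
        then have "s i * (s i + 1) \<le> 0" using Key sj that by simp
        then have "s i * (s i + 1) = 0" using int_facts(1)[of "s i"] by linarith
        then show ?thesis using int_facts(4) nz that by blast
      qed
      obtain u where u: "u < n" "\<phi> u j = 1"
      proof (rule ccontr)
        assume "\<not> thesis"
        then have "\<forall>v<n. \<phi> v j \<le> 0" using entry that by force
        then have "s j \<le> 0" unfolding s_def by (intro sum_nonpos) auto
        then show False using sj by simp
      qed
      have "(\<Sum>i<n. \<phi> u i * s i) = (\<Sum>i<n. 2 * (if i = j then \<phi> u i else 0) - \<phi> u i)"
        using others sj by (intro sum.cong) auto
      also have "\<dots> = 2 * \<phi> u j - (d u + 2)"
        using \<open>j < n\<close> E3[OF u(1)] by (simp add: sum_subtractf sum_distrib_left[symmetric])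
      finally have "deg u = 0" using pervertex[OF u(1)] u by simp
      then have noadj: "\<not> adj u v" if "v < n" for v
        using that unfolding deg_def by simp blast
      show False
      proof (cases "n = 1")
        case True
        then have "u = 0" "j = 0" using u \<open>j < n\<close> by auto
        then have "d 0 = -1" using E2[of 0] u True by simp
        then show False using mini True by auto
      next
        case False
        define v where "v = (if u = 0 then 1 else 0::nat)"
        have v: "v < n" "v \<noteq> u" using False n1 unfolding v_def by auto
        have "(u, v) \<in> {(x, y). adj x y}\<^sup>*" using conn u v unfolding graph_connected_def by auto
        then obtain z where "adj u z" using v(2) by (metis (no_types, lifting) case_prodD converse_rtranclE mem_Collect_eq)
        then show False using noadj inr by blast
      qed
    qed
    have "(s i + 1) * (s i + 2) = 0" if "i < n" for i
      using bnd[OF that] nz[OF that] no1[OF that] by auto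
    then have "(\<Sum>i<n. (s i + 1) * (s i + 2)) = (\<Sum>i<n. 0)" by (intro sum.cong) auto
    then show "(\<Sum>v<n. d v) = - 3 * int n - 1" using Q by simp
  next
    assume sd: "(\<Sum>v<n. d v) = - 3 * int n - 1"
    show "\<forall>i<n. \<not> index_type4 n \<phi> i"
    proof (intro allI impI notI)
      fix i assume i: "i < n" and t4: "index_type4 n \<phi> i"
      have "(\<Sum>i<n. (s i + 1) * (s i + 2)) = 0" using Q sd by simp
      then have "\<forall>i\<in>{..<n}. (s i + 1) * (s i + 2) = 0"
        by (subst sum_nonneg_eq_0_iff[symmetric]) (auto simp: int_facts)
      then have "(s i + 1) * (s i + 2) = 0" using i by blast
      then show False using t4s[OF t4] by simp
    qed
  qed
qed

end
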